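(* For complex numbers $x,y$ with $y\ne 0$, the double series \[ A(x,y)=\sum_{n=0}^{\infty} x^n\binom{2n}{n}\sum_{k=0}^n\binom{n}{k}^2\binom{2k}{n}(-1)^k y^{2k-n} \] converges absolutely provided \[ \left|16xy\left(\sqrt{\left|\frac{4x}{y}\right|}+\sqrt{1+\left|\frac{4x}{y}\right|}\right)^2\right|<1. \]
   Context: $\binom{2k}{n}=0$ for $n>2k$; absolute convergence means convergence of the double series of absolute values of all terms. *)

theory Defs
  imports "HOL-Analysis.Analysis"
begin

text \<open>The (n,k)-th term of the double series A(x,y). The exponent 2k-n may be
negative; it is an integer power (powi). When 2k < n the binomial (2k choose n)
vanishes, so the term is 0.\<close>
definition A_term :: "complex \<Rightarrow> complex \<Rightarrow> nat \<Rightarrow> nat \<Rightarrow> complex" where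
  "A_term x y n k = x ^ n * of_nat (2*n choose n) * of_nat ((n choose k)^2)
     * of_nat (2*k choose n) * (-1) ^ k * y powi (2 * int k - int n)"

end

theory Submission
  imports Defs
begin

lemma comb_bound:
  fixes n k :: nat
  assumes "k \<le> n" "n \<le> 2*k"
  shows "(n choose k)^2 * (2*k choose n) \<le> (2*n choose n) * (n choose (2*k-n))"
proof -
  have "(n choose k) * (n choose (2*k - k)) \<le> (\<Sum>i\<le>2*k. (n choose i) * (n choose (2*k - i)))"
    by (rule member_le_sum) auto
  also have "\<dots> = (2*n) choose (2*k)" by (simp add: vandermonde mult_2)
  finally have 1: "(n choose k)^2 \<le> (2*n) choose (2*k)" by (simp add: power2_eq_square)
  have "(2*n choose 2*k) * (2*k choose n) = (2*n choose n) * ((2*n - n) choose (2*k - n))"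
    by (rule choose_mult) (use assms in auto)
  then have 2: "(2*n choose 2*k) * (2*k choose n) = (2*n choose n) * (n choose (2*k - n))" by simp
  show ?thesis using mult_le_mono1[OF 1, of "2*k choose n"] 2 by simp
qed

lemma central_le: "(2*n choose n) \<le> (4::nat)^n"
proof -
  have "(2*n choose n) \<le> 2^(2*n)" by (rule binomial_le_pow2)
  also have "\<dots> = 4^n" by (simp add: power_mult)
  finally show ?thesis .
qed

lemma term_bound:
  fixes x y :: complex and n k :: nat
  assumes "y \<noteq> 0" "k \<le> n"
  shows "norm (A_term x y n k) \<le> (if n \<le> 2*k then (16 * norm x)^n * (n choose (2*k-n)) * norm y ^ (2*k-n) else 0)"
proof (cases "n \<le> 2*k")
  case False
  then have "(2*k choose n) = 0" by simp
  then show ?thesis using False by (simp add: A_term_def)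
next
  case True
  have pw: "2 * int k - int n = int (2*k - n)" using True by simp
  have "norm (A_term x y n k) = norm x ^ n * real ((2*n choose n) * ((n choose k)^2 * (2*k choose n))) * norm y ^ (2*k-n)"
    unfolding A_term_def pw by (simp add: norm_mult norm_power norm_power_int)
  also have "\<dots> \<le> norm x ^ n * real ((2*n choose n) * ((2*n choose n) * (n choose (2*k-n)))) * norm y ^ (2*k-n)"
  proof -
    have h: "real ((n choose k)^2 * (2*k choose n)) \<le> real ((2*n choose n) * (n choose (2*k-n)))"
      using comb_bound[OF assms(2) True] by (rule of_nat_mono)
    show ?thesis
      by (intro mult_right_mono mult_left_mono of_nat_mono) (use comb_bound[OF assms(2) True] in auto)
  qed
  also have "\<dots> \<le> norm x ^ n * real ((4^n) * ((4^n) * (n choose (2*k-n)))) * norm y ^ (2*k-n)"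
  proof -
    have "(2*n choose n) * ((2*n choose n) * (n choose (2*k-n))) \<le> 4^n * (4^n * (n choose (2*k-n)))"
      by (intro mult_le_mono order_refl central_le)
    then show ?thesis
      by (intro mult_right_mono mult_left_mono of_nat_mono) auto
  qed
  also have "\<dots> = (16 * norm x)^n * (n choose (2*k-n)) * norm y ^ (2*k-n)"
  proof -
    have e: "(16::real)^n = 4^n*4^n" by (simp flip: power_mult_distrib)
    show ?thesis by (simp add: power_mult_distrib e mult_ac)
  qed
  finally show ?thesis using True by simp
qed

lemma row_bound:
  fixes a b :: real and n :: nat
  assumes "a \<ge> 0" "b \<ge> 0"
  shows "(\<Sum>k\<le>n. (if n \<le> 2*k then a^n * (n choose (2*k-n)) * b ^ (2*k-n) else 0)) \<le> (a*(1+b))^n"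
proof -
  define S where "S = {k\<in>{..n}. n \<le> 2*k}"
  define g where "g j = real (n choose j) * b ^ j" for j
  have "(\<Sum>k\<le>n. (if n \<le> 2*k then a^n * (n choose (2*k-n)) * b ^ (2*k-n) else 0))
      = (\<Sum>k\<in>S. a^n * g (2*k-n))"
    unfolding S_def g_def by (simp add: sum.inter_filter[symmetric] mult.assoc)
  also have "\<dots> = a^n * (\<Sum>k\<in>S. g (2*k-n))" by (simp add: sum_distrib_left)
  also have "(\<Sum>k\<in>S. g (2*k-n)) = sum g ((\<lambda>k. 2*k-n) ` S)"
  proof (rule sum.reindex[symmetric, unfolded comp_def])
    show "inj_on (\<lambda>k. 2*k-n) S" by (auto simp: inj_on_def S_def)
  qed
  also have "\<dots> \<le> sum g {..n}"
    by (rule sum_mono2) (auto simp: S_def g_def assms)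
  also have "sum g {..n} = (b+1)^n" by (simp add: g_def binomial_ring)
  finally have "(\<Sum>k\<le>n. (if n \<le> 2*k then a^n * (n choose (2*k-n)) * b ^ (2*k-n) else 0)) \<le> a^n * (b+1)^n"
    using assms by (simp add: mult_left_mono)
  then show ?thesis by (simp add: power_mult_distrib add.commute)
qed

lemma cond_lemma:
  fixes a b p q :: real
  assumes "a \<ge> 0" "b > 0" "p \<ge> 0" "q \<ge> 0" "p^2 = 4*a/b" "q^2 = 1 + 4*a/b"
    and "16*a*b*(p+q)^2 < 1"
  shows "16*a*(1+b) < 1"
proof (rule ccontr)
  assume "\<not> ?thesis"
  then have h: "16*a+16*a*b \<ge> 1" by (simp add: algebra_simps)
  define ww where "ww = b*p*q"
  have ww0: "ww \<ge> 0" using assms by (simp add: ww_def)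
  have bt: "b * p^2 = 4*a" using assms by simp
  have ww2: "ww^2 = 4*a*b + 16*a^2"
  proof -
    have "ww^2 = b^2 * p^2 * q^2" by (simp add: ww_def power_mult_distrib)
    also have "\<dots> = (b*p^2) * (b + b*(4*a/b))" using assms by (simp add: power2_eq_square algebra_simps)
    also have "\<dots> = 4*a*(b+4*a)" using bt assms by simp
    finally show ?thesis by (simp add: algebra_simps power2_eq_square)
  qed
  have P: "16*a*b*(p+q)^2 = 16*a*b + 128*a^2 + 32*a*ww"
  proof -
    have "16*a*b*(p+q)^2 = 16*a*b*(p^2+q^2) + 32*a*(b*p*q)" by (simp add: power2_eq_square algebra_simps)
    also have "\<dots> = 16*a*b*(1 + 2*(4*a/b)) + 32*a*ww" using assms by (simp add: ww_def)
    also have "\<dots> = 16*a*b + 128*a^2 + 32*a*ww" using assms by (simp add: field_simps power2_eq_square)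
    finally show ?thesis .
  qed
  have wwb: "ww \<ge> (1 - 8*a)/2"
  proof (cases "1 - 8*a \<le> 0")
    case True then show ?thesis using ww0 by simp
  next
    case False
    have e: "((1-8*a)/2)^2 = (1-16*a)/4 + 16*a^2" by (simp add: power2_eq_square field_simps)
    have "((1-8*a)/2)^2 \<le> ww^2" using ww2 h by (simp add: power2_eq_square field_simps)
    then show ?thesis using ww0 by (rule power2_le_imp_le)
  qed
  have "32*a*ww \<ge> 32*a*((1 - 8*a)/2)" using mult_left_mono[OF wwb, of "32*a"] assms(1) by simp
  moreover have "32*a*((1-8*a)/2) = 16*a - 128 * a^2" by (simp add: field_simps power2_eq_square)
  ultimately have "16*a*b*(p+q)^2 \<ge> 1" using P h by linarith
  then show False using assms(7) by simp
qed


theorem proposition2p2: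
  fixes x y :: complex
  assumes "y \<noteq> 0"
    and "norm (16 * x * y * (complex_of_real (sqrt (norm (4 * x / y)))
                 + complex_of_real (sqrt (1 + norm (4 * x / y)))) ^ 2) < 1"
  shows "(\<lambda>(n, k). norm (A_term x y n k)) summable_on {(n, k). k \<le> n}"
proof -
  define a where "a = norm x"
  define b where "b = norm y"
  define p where "p = sqrt (norm (4 * x / y))"
  define q where "q = sqrt (1 + norm (4 * x / y))"
  have a0: "a \<ge> 0" and b0: "b > 0" using assms(1) by (auto simp: a_def b_def)
  have t: "norm (4 * x / y) = 4*a/b" by (simp add: a_def b_def norm_divide)
  have p0: "p \<ge> 0" and q0: "q \<ge> 0" by (auto simp: p_def q_def)
  have p2: "p^2 = 4*a/b" unfolding p_def t using a0 b0 by simp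
  have q2: "q^2 = 1 + 4*a/b" unfolding q_def t using a0 b0 by simp
  have "norm (16 * x * y * (complex_of_real p + complex_of_real q) ^ 2) = 16*a*b*(p+q)^2"
    using p0 q0 by (simp add: a_def b_def norm_mult norm_power flip: of_real_add)
  then have "16*a*b*(p+q)^2 < 1" using assms(2) by (simp add: p_def q_def)
  then have r1: "16*a*(1+b) < 1" by (rule cond_lemma[OF a0 b0 p0 q0 p2 q2])
  define r where "r = 16*a*(1+b)"
  have r0: "r \<ge> 0" using a0 b0 by (simp add: r_def)
  have r1': "r < 1" using r1 by (simp add: r_def)
  define h where "h = (\<lambda>(n::nat, k::nat). if n \<le> 2*k then (16 * a)^n * (n choose (2*k-n)) * b ^ (2*k-n) else 0)"
  have hb: "norm (A_term x y n k) \<le> h (n, k)" if "k \<le> n" for n k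
    unfolding h_def a_def b_def prod.case by (rule term_bound[OF assms(1) that])
  have rowb: "(\<Sum>k\<le>n. h (n,k)) \<le> r^n" for n
    unfolding h_def r_def using row_bound[of "16*a" b n] a0 b0 by (simp add: mult.assoc)
  have geo: "(\<Sum>n\<le>N. r^n) \<le> 1/(1-r)" for N
  proof -
    have "(\<Sum>n\<in>{..N}. r^n) \<le> (\<Sum>n. r^n)"
      by (rule sum_le_suminf) (use r0 r1' in \<open>auto intro: summable_geometric\<close>)
    also have "\<dots> = 1/(1-r)" using r0 r1' by (simp add: suminf_geometric)
    finally show ?thesis .
  qed
  show ?thesis
  proof (rule nonneg_bdd_above_summable_on)
    show "bdd_above (sum (\<lambda>(n, k). norm (A_term x y n k)) ` {F. F \<subseteq> {(n, k). k \<le> n} \<and> finite F})"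
    proof (rule bdd_aboveI2)
      fix F :: "(nat \<times> nat) set" assume F: "F \<in> {F. F \<subseteq> {(n, k). k \<le> n} \<and> finite F}"
      define N where "N = Max (insert 0 (fst ` F))"
      have FS: "F \<subseteq> (SIGMA n:{..N}. {..n})"
      proof
        fix z assume z: "z \<in> F"
        obtain n k where zz: "z = (n,k)" by fastforce
        have "n \<le> N" unfolding N_def using F z zz by (intro Max_ge) force+
        then show "z \<in> (SIGMA n:{..N}. {..n})" using F z zz by auto
      qed
      have "sum (\<lambda>(n, k). norm (A_term x y n k)) F \<le> sum h F"
        by (rule sum_mono) (use F hb in auto)
      also have "\<dots> \<le> sum h (SIGMA n:{..N}. {..n})"
        by (rule sum_mono2) (use FS a0 b0 in \<open>auto simp: h_def\<close>)
      also have "\<dots> = (\<Sum>n\<le>N. \<Sum>k\<le>n. h (n,k))"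
        by (subst sum.Sigma) auto
      also have "\<dots> \<le> (\<Sum>n\<le>N. r^n)" by (rule sum_mono) (rule rowb)
      also have "\<dots> \<le> 1/(1-r)" by (rule geo)
      finally show "sum (\<lambda>(n, k). norm (A_term x y n k)) F \<le> 1/(1-r)" .
    qed
  qed auto
qed

end
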